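(* Let $X$ be an ordered Hausdorff space. Then $nw(Q_{P}(X)) = w(Q_{P}(X)) = |X|$.
   Context: An ordered Hausdorff space is a set carrying a linear order, equipped with its order topology, which is Hausdorff. A function $f\colon X\to Y$ between topological spaces is quasi-continuous at $x\in X$ if for every open $U\ni x$ and every open $V\ni f(x)$ there is a non-empty open $G\subseteq U$ with $f(G)\subseteq V$; $f$ is quasi-continuous if it is quasi-continuous at every point. $Q_{P}(X)$ is the set of all quasi-continuous functions $X\to\mathbb{R}$ with the topology of point-wise convergence, i.e. the subspace topology from $\mathbb{R}^{X}$; basic open sets are $\{g : g(x_i)\in U_i,\ 1\le i\le n\}$ with $x_i\in X$ and $U_i$ open in $\mathbb{R}$. For a space $Z$: $w(Z)=\aleph_0+\min\{|\mathcal{B}| : \mathcal{B}\text{ a base of }Z\}$; $nw(Z)=\aleph_0+\min\{|\mathcal{N}| : \mathcal{N}\text{ a network of }Z\}$, where a network is a family $\mathcal{N}$ of subsets of $Z$ such that for every $z\in Z$ and every open $U\ni z$ there is $N\in\mathcal{N}$ with $z\in N\subseteq U$. $|X|$ is the cardinality of $X$. *)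

theory Defs
  imports "HOL-Analysis.Analysis"
begin

definition quasi_continuous :: "('a::topological_space \<Rightarrow> real) \<Rightarrow> bool" where
  "quasi_continuous f \<longleftrightarrow>
     (\<forall>x U V. open U \<and> x \<in> U \<and> open V \<and> f x \<in> V \<longrightarrow>
        (\<exists>G. open G \<and> G \<noteq> {} \<and> G \<subseteq> U \<and> f ` G \<subseteq> V))"

definition QP :: "('a::topological_space \<Rightarrow> real) topology" where
  "QP = subtopology (product_topology (\<lambda>_. euclideanreal) UNIV) {f. quasi_continuous f}"

definition is_base :: "'a topology \<Rightarrow> 'a set set \<Rightarrow> bool" where
  "is_base Z B \<longleftrightarrow> (\<forall>b\<in>B. openin Z b) \<and>
     (\<forall>U. openin Z U \<longrightarrow> (\<forall>z\<in>U. \<exists>b\<in>B. z \<in> b \<and> b \<subseteq> U))"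

definition is_network :: "'a topology \<Rightarrow> 'a set set \<Rightarrow> bool" where
  "is_network Z N \<longleftrightarrow> (\<forall>n\<in>N. n \<subseteq> topspace Z) \<and>
     (\<forall>U. openin Z U \<longrightarrow> (\<forall>z\<in>U. \<exists>n\<in>N. z \<in> n \<and> n \<subseteq> U))"

text \<open>w(Z) = aleph_0 + min |B| over bases; nw(Z) likewise over networks (cardinals as in BNF).\<close>
definition weight :: "'a topology \<Rightarrow> ('a set + nat) rel" where
  "weight Z = BNF_Cardinal_Arithmetic.csum (card_of (SOME B. is_base Z B \<and> (\<forall>B'. is_base Z B' \<longrightarrow> (card_of B, card_of B') \<in> ordLeq))) natLeq"

definition netweight :: "'a topology \<Rightarrow> ('a set + nat) rel" where
  "netweight Z = BNF_Cardinal_Arithmetic.csum (card_of (SOME N. is_network Z N \<and> (\<forall>N'. is_network Z N' \<longrightarrow> (card_of N, card_of N') \<in> ordLeq))) natLeq"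

end

theory Submission
  imports Defs
begin

unbundle cardinal_syntax

lemma ex_min_card:
  assumes "P B0"
  shows "\<exists>B. P B \<and> (\<forall>B'. P B' \<longrightarrow> (card_of B, card_of B') \<in> ordLeq)"
proof -
  have "\<exists>r \<in> card_of ` {B. P B}. \<forall>r' \<in> card_of ` {B. P B}. r \<le>o r'"
    by (rule exists_minim_Well_order) (use assms card_of_Well_order in auto)
  then show ?thesis by auto
qed

fun enc :: "('a \<times> 'a \<Rightarrow> 'a) \<Rightarrow> 'a list \<Rightarrow> 'a" where
  "enc p [] = undefined"
| "enc p (x # xs) = p (x, enc p xs)"

lemma enc_inj:
  assumes "inj p"
  shows "length xs = length ys \<Longrightarrow> enc p xs = enc p ys \<Longrightarrow> xs = ys"
proof (induction xs arbitrary: ys)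
  case Nil
  then show ?case by simp
next
  case (Cons x xs)
  then obtain y ys' where "ys = y # ys'" by (cases ys) auto
  with Cons show ?case using assms by (auto dest: injD)
qed

lemma lists_univ_card:
  assumes "infinite (UNIV :: 'a set)"
  shows "|UNIV :: 'a list set| \<le>o |UNIV :: 'a set|"
proof -
  have "|(UNIV::'a set) \<times> (UNIV::'a set)| \<le>o |UNIV :: 'a set|"
    using card_of_Times_same_infinite[OF assms] ordIso_iff_ordLeq by blast
  then obtain p :: "'a \<times> 'a \<Rightarrow> 'a" where p: "inj p"
    using card_of_ordLeq[of "UNIV :: ('a \<times> 'a) set" "UNIV :: 'a set"] by auto
  have "|UNIV :: nat set| \<le>o |UNIV :: 'a set|"
    using infinite_iff_card_of_nat assms by blast
  then obtain q :: "nat \<Rightarrow> 'a" where q: "inj q"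
    using card_of_ordLeq[of "UNIV :: nat set" "UNIV :: 'a set"] by auto
  have "inj (\<lambda>l. p (q (length l), enc p l))"
  proof (rule injI)
    fix xs ys assume "p (q (length xs), enc p xs) = p (q (length ys), enc p ys)"
    then have "length xs = length ys" "enc p xs = enc p ys"
      using p q by (auto dest: injD)
    then show "xs = ys" using enc_inj[OF p] by blast
  qed
  then show ?thesis
    using card_of_ordLeq[of "UNIV :: 'a list set" "UNIV :: 'a set"] by blast
qed

lemma lists_card:
  assumes "infinite (UNIV :: 'a set)" "|C| \<le>o |UNIV :: 'a set|"
  shows "|lists C| \<le>o |UNIV :: 'a set|"
proof -
  obtain g :: "'b \<Rightarrow> 'a" where g: "inj_on g C"
    using assms(2) card_of_ordLeq[of C "UNIV :: 'a set"] by auto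
  have "inj_on (map g) (lists C)"
  proof (rule inj_onI)
    fix xs ys assume "xs \<in> lists C" "ys \<in> lists C" "map g xs = map g ys"
    then show "xs = ys"
      using map_inj_on[of g xs ys] g by (meson inj_on_subset le_sup_iff in_listsD subsetI)
  qed
  then have "|lists C| \<le>o |UNIV :: 'a list set|"
    using card_of_ordLeq[of "lists C" "UNIV :: 'a list set"] by blast
  then show ?thesis using lists_univ_card[OF assms(1)] ordLeq_transitive by blast
qed


abbreviation PT :: "('a \<Rightarrow> real) topology" where
  "PT \<equiv> product_topology (\<lambda>_. euclideanreal) UNIV"

lemma topspace_PT [simp]: "topspace PT = UNIV"
  by (auto simp: PiE_def extensional_def)

lemma openin_eval: "open V \<Longrightarrow> openin PT {g. g a \<in> V}"
  using openin_continuous_map_preimage[OF continuous_map_product_projection[of a UNIV "\<lambda>_. euclideanreal"], of V]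
  by simp

lemma topspace_QP: "topspace QP = {f. quasi_continuous f}"
  by (simp add: QP_def)

lemma openin_QP: "openin PT T \<Longrightarrow> openin QP (T \<inter> {f. quasi_continuous f})"
  unfolding QP_def openin_subtopology by blast

lemma openin_evals: "(\<forall>(a,V)\<in>set l. open V) \<Longrightarrow> openin PT {g. \<forall>(a,V)\<in>set l. g a \<in> V}"
proof (induction l)
  case Nil
  then show ?case using openin_topspace[of PT] by simp
next
  case (Cons p l)
  obtain a V where p: "p = (a, V)" by (cases p)
  have "{g. \<forall>(a,V)\<in>set (p # l). g a \<in> V} = {g. g a \<in> V} \<inter> {g. \<forall>(a,V)\<in>set l. g a \<in> V}"
    using p by auto
  have o1: "openin PT {g. g a \<in> V}" using Cons.prems p openin_eval[of V a] by simp
  have o2: "openin PT {g. \<forall>(a,V)\<in>set l. g a \<in> V}" using Cons.IH Cons.prems by simp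
  show ?case unfolding \<open>{g. \<forall>(a,V)\<in>set (p # l). g a \<in> V} = _\<close> by (rule openin_Int[OF o1 o2])
qed

lemma base_small:
  assumes inf: "infinite (UNIV :: 'a set)"
  shows "\<exists>B. is_base (QP :: ('a::topological_space \<Rightarrow> real) topology) B \<and> |B| \<le>o |UNIV :: 'a set|"
proof -
  obtain \<B> :: "real set set" where cB: "countable \<B>" and oB: "\<And>C. C \<in> \<B> \<Longrightarrow> open C"
    and bB: "\<And>S. open S \<Longrightarrow> \<exists>U. U \<subseteq> \<B> \<and> S = \<Union>U"
    using univ_second_countable by blast
  define bs where "bs l = {g. \<forall>(a,V)\<in>set l. g a \<in> V} \<inter> {f. quasi_continuous f}"
    for l :: "('a \<times> real set) list"
  define B where "B = bs ` lists (UNIV \<times> \<B>)"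
  have "is_base QP B"
    unfolding is_base_def
  proof (intro conjI ballI allI impI)
    fix b assume "b \<in> B"
    then obtain l where l: "l \<in> lists (UNIV \<times> \<B>)" "b = bs l" unfolding B_def by auto
    then have "\<forall>(a,V)\<in>set l. open V" using oB by auto
    then have "openin PT {g. \<forall>(a,V)\<in>set l. g a \<in> V}" by (rule openin_evals)
    then show "openin QP b" unfolding l(2) bs_def by (rule openin_QP)
  next
    fix U and z :: "'a \<Rightarrow> real" assume U: "openin QP U" and zU: "z \<in> U"
    then obtain T where T: "openin PT T" "U = T \<inter> {f. quasi_continuous f}"
      unfolding QP_def openin_subtopology by blast
    then have "z \<in> T" using zU by auto
    then obtain W0 where W0: "finite {i \<in> UNIV. W0 i \<noteq> topspace euclideanreal}"
        "\<forall>i \<in> UNIV. openin euclideanreal (W0 i)" "z \<in> Pi\<^sub>E UNIV W0" "Pi\<^sub>E UNIV W0 \<subseteq> T"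
      using openin_product_topology_alt[THEN iffD1, rule_format, OF T(1)] by meson
    define W :: "'a \<Rightarrow> real set" where "W = W0"
    have W: "finite {i. W i \<noteq> UNIV}" "\<And>i. open (W i)"
      "z \<in> Pi\<^sub>E UNIV W" "Pi\<^sub>E UNIV W \<subseteq> T"
      using W0 unfolding W_def by simp_all
    have "\<forall>i. \<exists>C. C \<in> \<B> \<and> z i \<in> C \<and> C \<subseteq> W i"
    proof
      fix i
      have oWi: "open (W i)" by (rule W(2))
      then obtain K where K: "K \<subseteq> \<B>" "W i = \<Union>K" using bB[OF oWi] by blast
      have zi: "z i \<in> W i" using W(3) by (simp add: PiE_iff)
      then obtain C where C: "C \<in> K" "z i \<in> C" unfolding K(2) by (rule UnionE)
      have "C \<in> \<B>" using C(1) K(1) by (rule subsetD[rotated])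
      moreover have "C \<subseteq> W i" unfolding K(2) using C(1) by (rule Union_upper)
      ultimately show "\<exists>C. C \<in> \<B> \<and> z i \<in> C \<and> C \<subseteq> W i" using C(2) by blast
    qed
    then obtain c :: "'a \<Rightarrow> real set" where c: "\<And>i. c i \<in> \<B> \<and> z i \<in> c i \<and> c i \<subseteq> W i" by metis
    obtain l0 :: "'a list" where l0: "set l0 = {i. W i \<noteq> UNIV}" using finite_list W(1) by blast
    define l where "l = map (\<lambda>i. (i, c i)) l0"
    have "l \<in> lists (UNIV \<times> \<B>)" using c unfolding l_def by auto
    moreover have "z \<in> bs l" using zU T c unfolding bs_def l_def by auto
    moreover have "bs l \<subseteq> U"
    proof
      fix g assume g: "g \<in> bs l"
      have "g \<in> Pi\<^sub>E UNIV W"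
      proof (simp add: PiE_iff, intro allI)
        fix i show "g i \<in> W i"
        proof (cases "W i = UNIV")
          case False
          then have "(i, c i) \<in> set l" using l0 unfolding l_def by auto
          then have "g i \<in> c i" using g unfolding bs_def by blast
          then show ?thesis using c by blast
        qed simp
      qed
      then show "g \<in> U" using g W(4) T(2) unfolding bs_def by auto
    qed
    ultimately show "\<exists>b\<in>B. z \<in> b \<and> b \<subseteq> U" unfolding B_def by blast
  qed
  moreover have "|B| \<le>o |UNIV :: 'a set|"
  proof -
    have "|\<B>| \<le>o |UNIV :: nat set|" using cB card_of_ordLeq[of \<B> "UNIV :: nat set"] unfolding countable_def by blast
    moreover have "|UNIV :: nat set| \<le>o |UNIV :: 'a set|" using infinite_iff_card_of_nat inf by blast
    ultimately have "|\<B>| \<le>o |UNIV :: 'a set|" using ordLeq_transitive by blast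
    then have "|(UNIV :: 'a set) \<times> \<B>| \<le>o |(UNIV :: 'a set) \<times> (UNIV :: 'a set)|"
      using card_of_Times_mono2 by blast
    moreover have "|(UNIV :: 'a set) \<times> (UNIV :: 'a set)| \<le>o |UNIV :: 'a set|"
      using card_of_Times_same_infinite[OF inf] ordIso_iff_ordLeq by blast
    ultimately have "|(UNIV :: 'a set) \<times> \<B>| \<le>o |UNIV :: 'a set|" using ordLeq_transitive by blast
    then have "|lists ((UNIV :: 'a set) \<times> \<B>)| \<le>o |UNIV :: 'a set|" using lists_card[OF inf] by blast
    moreover have "|B| \<le>o |lists ((UNIV :: 'a set) \<times> \<B>)|" unfolding B_def by (rule card_of_image)
    ultimately show ?thesis using ordLeq_transitive by blast
  qed
  ultimately show ?thesis by blast
qed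


definition hasS :: "'a::linorder \<Rightarrow> bool" where
  "hasS x \<longleftrightarrow> (\<exists>s>x. {x<..<s} = {})"

definition sc :: "'a::linorder \<Rightarrow> 'a" where
  "sc x = (SOME s. s > x \<and> {x<..<s} = {})"

definition fx :: "'a::linorder \<Rightarrow> 'a \<Rightarrow> real" where
  "fx x = (if hasS x then (\<lambda>z. if z \<le> x then 1 else 0) else (\<lambda>z. if x \<le> z then 1 else 0))"

definition Wx :: "'a::linorder \<Rightarrow> ('a \<Rightarrow> real) set" where
  "Wx x = (if hasS x then {g. g x \<in> {1/2<..}} \<inter> {g. g (sc x) \<in> {..<1/2}} else {g. g x \<in> {1/2<..}})"

lemma sc_prop: "hasS x \<Longrightarrow> sc x > x \<and> {x<..<sc x} = {}"
  unfolding hasS_def sc_def by (rule someI_ex) blast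

lemma sc_le: "hasS x \<Longrightarrow> x < y \<Longrightarrow> sc x \<le> y"
  using sc_prop[of x] by (metis greaterThanLessThan_iff empty_iff not_le)

lemma qc_clopen:
  fixes A :: "'a::topological_space set"
  assumes "open A" "open (- A)"
  shows "quasi_continuous (\<lambda>z. if z \<in> A then 1 else 0)"
  unfolding quasi_continuous_def
proof (intro allI impI)
  fix x U V assume H: "open U \<and> x \<in> U \<and> open V \<and> (if x \<in> A then 1 else 0 :: real) \<in> V"
  show "\<exists>G. open G \<and> G \<noteq> {} \<and> G \<subseteq> U \<and> (\<lambda>z. if z \<in> A then 1 else 0 :: real) ` G \<subseteq> V"
  proof (cases "x \<in> A")
    case True
    then show ?thesis using H assms by (intro exI[of _ "U \<inter> A"]) auto
  next
    case False
    then show ?thesis using H assms by (intro exI[of _ "U \<inter> - A"]) auto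
  qed
qed

lemma qc_a:
  fixes x :: "'a::linorder_topology"
  assumes "hasS x"
  shows "quasi_continuous (fx x)"
proof -
  have eq: "fx x = (\<lambda>z. if z \<in> {..<sc x} then 1 else 0)"
  proof
    fix z
    have "z \<le> x \<longleftrightarrow> z < sc x" using sc_prop[OF assms] sc_le[OF assms, of z]
      by (metis dual_order.strict_trans2 not_le)
    then show "fx x z = (if z \<in> {..<sc x} then 1 else 0)" using assms by (simp add: fx_def)
  qed
  have "- {..<sc x} = {x<..}" using sc_prop[OF assms] sc_le[OF assms]
    by (auto simp: not_less)
  then show ?thesis unfolding eq by (intro qc_clopen) auto
qed

lemma qc_b:
  fixes x :: "'a::linorder_topology"
  assumes "\<not> hasS x" "\<exists>y. x < y"
  shows "quasi_continuous (fx x)"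
  unfolding quasi_continuous_def
proof (intro allI impI)
  fix z U V assume H: "open U \<and> z \<in> U \<and> open V \<and> fx x z \<in> V"
  have f: "fx x = (\<lambda>z. if x \<le> z then 1 else 0)" using assms by (simp add: fx_def)
  show "\<exists>G. open G \<and> G \<noteq> {} \<and> G \<subseteq> U \<and> fx x ` G \<subseteq> V"
  proof (cases "x < z")
    case True
    then show ?thesis using H less_imp_le[OF True] unfolding f by (intro exI[of _ "U \<inter> {x<..}"]) auto
  next
    case False
    show ?thesis
    proof (cases "z < x")
      case True
      then have "\<not> x \<le> z" by simp
      then show ?thesis using H True unfolding f by (intro exI[of _ "U \<inter> {..<x}"]) auto
    next
      case False
      then have zx: "z = x" using \<open>\<not> x < z\<close> by auto
      obtain y where "x < y" using assms(2) by blast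
      then obtain b where b: "b > x" "{x..<b} \<subseteq> U" using open_right[of U x y] H zx by blast
      have ne: "{x<..<b} \<noteq> {}" using assms(1) b(1) unfolding hasS_def by blast
      have sub: "{x<..<b} \<subseteq> U"
      proof
        fix w assume "w \<in> {x<..<b}"
        then have "w \<in> {x..<b}" by auto
        then show "w \<in> U" using b(2) by blast
      qed
      show ?thesis using H zx sub ne unfolding f
        by (intro exI[of _ "{x<..<b}"]) auto
    qed
  qed
qed

lemma fx_in_Wx: "fx x \<in> Wx x"
proof (cases "hasS x")
  case True
  then show ?thesis using sc_prop[OF True] by (auto simp: fx_def Wx_def)
next
  case False
  then show ?thesis by (auto simp: fx_def Wx_def)
qed

lemma open_Wx: "openin PT (Wx x)"
proof (cases "hasS x")
  case True
  then show ?thesis unfolding Wx_def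
    by (simp only: if_True) (rule openin_Int[OF openin_eval openin_eval]; simp)
next
  case False
  then show ?thesis unfolding Wx_def
    by (simp only: if_False) (rule openin_eval; simp)
qed

lemma sep:
  fixes x y :: "'a::linorder"
  assumes "x < y"
  shows "\<not> (fx y \<in> Wx x \<and> fx x \<in> Wx y)"
proof
  assume H: "fx y \<in> Wx x \<and> fx x \<in> Wx y"
  show False
  proof (cases "hasS x")
    case True
    have s: "sc x \<le> y" using sc_le[OF True assms] .
    have "fx y x > 1/2" "fx y (sc x) < 1/2" using H True by (auto simp: Wx_def)
    then show False using s assms by (auto simp: fx_def split: if_splits)
  next
    case False
    have "fx y x > 1/2" using H False by (auto simp: Wx_def)
    then have hy: "hasS y" using assms by (auto simp: fx_def split: if_splits)
    have "fx x (sc y) < 1/2" using H hy by (auto simp: Wx_def)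
    moreover have "x \<le> sc y" using sc_prop[OF hy] assms by (meson less_imp_le less_trans)
    ultimately show False using False by (auto simp: fx_def)
  qed
qed


lemma net_large:
  fixes N :: "('a::linorder_topology \<Rightarrow> real) set set"
  assumes inf: "infinite (UNIV::'a set)" and net: "is_network QP N"
  shows "|UNIV::'a set| \<le>o |N|"
proof -
  define D where "D = {x::'a. \<exists>y. x < y}"
  define Q where "Q = {f::'a \<Rightarrow> real. quasi_continuous f}"
  have qc: "quasi_continuous (fx x)" if "x \<in> D" for x
  proof (cases "hasS x")
    case True
    then show ?thesis by (rule qc_a)
  next
    case False
    then show ?thesis using that unfolding D_def by (intro qc_b) auto
  qed
  have ex: "\<exists>n\<in>N. fx x \<in> n \<and> n \<subseteq> Wx x \<inter> Q" if "x \<in> D" for x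
  proof -
    have "openin QP (Wx x \<inter> Q)" unfolding Q_def by (rule openin_QP[OF open_Wx])
    moreover have "fx x \<in> Wx x \<inter> Q" using fx_in_Wx qc[OF that] unfolding Q_def by blast
    ultimately show ?thesis using net unfolding is_network_def by blast
  qed
  define \<phi> where "\<phi> x = (SOME n. n \<in> N \<and> fx x \<in> n \<and> n \<subseteq> Wx x \<inter> Q)" for x
  have \<phi>: "\<phi> x \<in> N \<and> fx x \<in> \<phi> x \<and> \<phi> x \<subseteq> Wx x \<inter> Q" if "x \<in> D" for x
  proof -
    have "\<exists>n. n \<in> N \<and> fx x \<in> n \<and> n \<subseteq> Wx x \<inter> Q" using ex[OF that] by blast
    then show ?thesis unfolding \<phi>_def by (rule someI_ex)
  qed
  have "inj_on \<phi> D"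
  proof (rule inj_onI)
    fix x y assume xy: "x \<in> D" "y \<in> D" "\<phi> x = \<phi> y"
    have a: "fx y \<in> Wx x" using \<phi>[OF xy(1)] \<phi>[OF xy(2)] xy(3) by blast
    have b: "fx x \<in> Wx y" using \<phi>[OF xy(1)] \<phi>[OF xy(2)] xy(3) by blast
    show "x = y"
    proof (rule linorder_cases[of x y])
      assume "x < y" then show ?thesis using sep[of x y] a b by blast
    next
      assume "y < x" then show ?thesis using sep[of y x] a b by blast
    qed
  qed
  moreover have "\<phi> ` D \<subseteq> N" using \<phi> by blast
  ultimately have DN: "|D| \<le>o |N|" using card_of_ordLeq[of D N] by blast
  define m where "m = (SOME m::'a. \<forall>y. y \<le> m)"
  have sub: "UNIV - {m} \<subseteq> D"
  proof
    fix x assume "x \<in> UNIV - {m}"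
    show "x \<in> D"
    proof (rule ccontr)
      assume "x \<notin> D"
      then have ax: "\<forall>y. y \<le> x" unfolding D_def by (auto simp: not_less)
      then have "\<forall>y. y \<le> m" unfolding m_def by (rule someI)
      then have "x = m" using ax by (meson order.antisym)
      then show False using \<open>x \<in> UNIV - {m}\<close> by blast
    qed
  qed
  have inf2: "infinite (UNIV - {m})" using inf by simp
  have ne: "UNIV - {m} \<noteq> {}" using inf2 by (metis finite.emptyI)
  have "|{m}| \<le>o |UNIV - {m}|" by (rule card_of_singl_ordLeq[OF ne])
  then have P: "|(UNIV - {m}) <+> {m}| =o |UNIV - {m}|" by (rule card_of_Plus_infinite1[OF inf2])
  have "inj (\<lambda>z. if z = m then Inr m else Inl z :: 'a + 'a)" by (rule injI) (simp split: if_splits)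
  moreover have "(\<lambda>z. if z = m then Inr m else Inl z :: 'a + 'a) ` UNIV \<subseteq> (UNIV - {m}) <+> {m}" by auto
  ultimately have 1: "|UNIV::'a set| \<le>o |(UNIV - {m}) <+> {m}|" using card_of_ordLeq[of UNIV "(UNIV - {m}) <+> {m}"] by blast
  have 2: "|(UNIV - {m}) <+> {m}| \<le>o |UNIV - {m}|" using P by (rule ordIso_imp_ordLeq)
  have 3: "|UNIV - {m}| \<le>o |D|" using sub by (rule card_of_mono1)
  show ?thesis using ordLeq_transitive[OF ordLeq_transitive[OF ordLeq_transitive[OF 1 2] 3] DN] .
qed

lemma base_network: "is_base Z B \<Longrightarrow> is_network Z B"
  unfolding is_base_def is_network_def using openin_subset by blast

theorem mainTheorem1:
  assumes "infinite (UNIV :: 'a::linorder_topology set)"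
  shows "(netweight (QP :: ('a \<Rightarrow> real) topology), weight (QP :: ('a \<Rightarrow> real) topology)) \<in> ordIso
         \<and> (weight (QP :: ('a \<Rightarrow> real) topology), card_of (UNIV :: 'a set)) \<in> ordIso"
proof -
  let ?Z = "QP :: ('a \<Rightarrow> real) topology"
  obtain B0 where B0: "is_base ?Z B0" "|B0| \<le>o |UNIV :: 'a set|" using base_small[OF assms] by blast
  define Bm where "Bm = (SOME B. is_base ?Z B \<and> (\<forall>B'. is_base ?Z B' \<longrightarrow> (card_of B, card_of B') \<in> ordLeq))"
  have Bm: "is_base ?Z Bm \<and> (\<forall>B'. is_base ?Z B' \<longrightarrow> (card_of Bm, card_of B') \<in> ordLeq)"
    unfolding Bm_def by (rule someI_ex[OF ex_min_card[of "is_base ?Z", OF B0(1)]])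
  define Nm where "Nm = (SOME N. is_network ?Z N \<and> (\<forall>N'. is_network ?Z N' \<longrightarrow> (card_of N, card_of N') \<in> ordLeq))"
  have Nm: "is_network ?Z Nm \<and> (\<forall>N'. is_network ?Z N' \<longrightarrow> (card_of Nm, card_of N') \<in> ordLeq)"
    unfolding Nm_def by (rule someI_ex[OF ex_min_card[of "is_network ?Z", OF base_network[OF conjunct1[OF Bm]]]])
  have b1: "|Bm| \<le>o |UNIV :: 'a set|" by (rule ordLeq_transitive[OF Bm[THEN conjunct2, rule_format, OF B0(1)] B0(2)])
  have n1: "|UNIV :: 'a set| \<le>o |Nm|" by (rule net_large[OF assms Nm[THEN conjunct1]])
  have nb: "|Nm| \<le>o |Bm|" by (rule Nm[THEN conjunct2, rule_format, OF base_network[OF Bm[THEN conjunct1]]])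
  have ub: "|UNIV :: 'a set| \<le>o |Bm|" by (rule ordLeq_transitive[OF n1 nb])
  have nu: "|Nm| \<le>o |UNIV :: 'a set|" by (rule ordLeq_transitive[OF nb b1])
  have bI: "|Bm| =o |UNIV :: 'a set|" by (rule ordIso_iff_ordLeq[THEN iffD2, OF conjI[OF b1 ub]])
  have nI: "|Nm| =o |UNIV :: 'a set|" by (rule ordIso_iff_ordLeq[THEN iffD2, OF conjI[OF nu n1]])
  have absorb: "|A| +c natLeq =o |A|" if "|UNIV :: 'a set| \<le>o |A|" for A :: "('a \<Rightarrow> real) set set"
  proof -
    have "infinite A" using card_of_ordLeq_infinite[OF that assms] .
    then have c1: "Cinfinite |A|" by (simp add: cinfinite_def Field_card_of card_of_card_order_on)
    have c2: "natLeq \<le>o |A|" using infinite_iff_natLeq_ordLeq[of A] \<open>infinite A\<close> by blast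
    show ?thesis by (rule csum_absorb1[OF c1 c2])
  qed
  have w: "weight ?Z =o |UNIV :: 'a set|"
  proof -
    have "weight ?Z = |Bm| +c natLeq" unfolding weight_def Bm_def ..
    moreover have "|Bm| +c natLeq =o |Bm|" by (rule absorb[OF ub])
    ultimately show ?thesis using ordIso_transitive[OF _ bI] by simp
  qed
  have nw: "netweight ?Z =o |UNIV :: 'a set|"
  proof -
    have "netweight ?Z = |Nm| +c natLeq" unfolding netweight_def Nm_def ..
    moreover have "|Nm| +c natLeq =o |Nm|" by (rule absorb[OF n1])
    ultimately show ?thesis using ordIso_transitive[OF _ nI] by simp
  qed
  show ?thesis using ordIso_transitive[OF nw ordIso_symmetric[OF w]] w by simp
qed

end
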